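(* Let $n\ge 2$, let $G$ and $H$ be non-trivial groups, let $\sigma\colon G\to S_n$ be a surjective homomorphism, and let $W=H\wr_\sigma G=H^n\rtimes_\sigma G$. Then \[ Z(W)=\Delta(Z(H))\times\bigl(Z(G)\cap\ker\sigma\bigr), \] where $\Delta(Z(H))=\{((a,\dots,a),1): a\in Z(H)\}$ and $Z(G)\cap\ker\sigma$ is identified with $\{(\mathbf 1,g): g\in Z(G)\cap\ker\sigma\}$. In particular, if $Z(G)\subseteq\ker\sigma$, then $Z(W)=\Delta(Z(H))\times Z(G)$.
   Context: For $n\ge2$, groups $G,H$ and a homomorphism $\sigma\colon G\to S_n$, the permutational wreath pullback $H\wr_\sigma G=H^n\rtimes_\sigma G$ is the semidirect product in which $G$ acts on $H^n$ by permuting coordinates through $\sigma$: $g\cdot(h_1,\dots,h_n)=(h_{\sigma(g)(1)},\dots,h_{\sigma(g)(n)})$ (with the composition convention in $S_n$ making this a left action). Elements are pairs $(\mathbf h,g)$ with $\mathbf h\in H^n$, $g\in G$, and $(\mathbf h,g)(\mathbf k,x)=(\mathbf h\cdot g\mathbf k,\,gx)$. The diagonal map is $\Delta\colon H\to H^n$, $\Delta(h)=(h,\dots,h)$. *)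

theory Defs
  imports "HOL-Algebra.Algebra"
begin

definition group_center :: "('a, 'm) monoid_scheme \<Rightarrow> 'a set" where
  "group_center G = {z \<in> carrier G. \<forall>x \<in> carrier G. z \<otimes>\<^bsub>G\<^esub> x = x \<otimes>\<^bsub>G\<^esub> z}"

text \<open>The symmetric group S_n on {1..n}, with the composition convention
  "apply the left factor first" (p * q = q o p), which makes the coordinate
  permutation below a left action.\<close>
definition Sn :: "nat \<Rightarrow> (nat \<Rightarrow> nat) monoid" where
  "Sn n = \<lparr> partial_object.carrier = {p. p permutes {1..n}}, monoid.mult = (\<lambda>p q. q \<circ> p), monoid.one = id \<rparr>"

text \<open>Permutational wreath product H wr_sigma G = H^n semidirect G; tuples in H^n are
  extensional functions on {1..n}; g acts by (g . k) i = k (sigma g i).\<close>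
definition wreath :: "('h, 'x) monoid_scheme \<Rightarrow> ('g, 'y) monoid_scheme \<Rightarrow> nat
    \<Rightarrow> ('g \<Rightarrow> nat \<Rightarrow> nat) \<Rightarrow> ((nat \<Rightarrow> 'h) \<times> 'g) monoid" where
  "wreath H G n \<sigma> = \<lparr> partial_object.carrier = ({1..n} \<rightarrow>\<^sub>E carrier H) \<times> carrier G,
     monoid.mult = (\<lambda>(h, g) (k, x). ((\<lambda>i\<in>{1..n}. h i \<otimes>\<^bsub>H\<^esub> k (\<sigma> g i)), g \<otimes>\<^bsub>G\<^esub> x)),
     monoid.one = ((\<lambda>i\<in>{1..n}. \<one>\<^bsub>H\<^esub>), \<one>\<^bsub>G\<^esub>) \<rparr>"

definition diag_emb :: "('h, 'x) monoid_scheme \<Rightarrow> ('g, 'y) monoid_scheme \<Rightarrow> nat \<Rightarrow> 'h \<Rightarrow> (nat \<Rightarrow> 'h) \<times> 'g" where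
  "diag_emb H G n a = ((\<lambda>i\<in>{1..n}. a), \<one>\<^bsub>G\<^esub>)"

definition top_emb :: "('h, 'x) monoid_scheme \<Rightarrow> nat \<Rightarrow> 'g \<Rightarrow> (nat \<Rightarrow> 'h) \<times> 'g" where
  "top_emb H n g = ((\<lambda>i\<in>{1..n}. \<one>\<^bsub>H\<^esub>), g)"

end

theory Submission
  imports Defs
begin

lemma wmult: "(h,g) \<otimes>\<^bsub>wreath H G n \<sigma>\<^esub> (k,x) = ((\<lambda>i\<in>{1..n}. h i \<otimes>\<^bsub>H\<^esub> k (\<sigma> g i)), g \<otimes>\<^bsub>G\<^esub> x)"
  by (simp add: wreath_def)

lemma wcarrier: "carrier (wreath H G n \<sigma>) = ({1..n} \<rightarrow>\<^sub>E carrier H) \<times> carrier G"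
  by (simp add: wreath_def)

lemma sigma_perm:
  assumes "\<sigma> \<in> hom G (Sn n)" "x \<in> carrier G"
  shows "\<sigma> x permutes {1..n}"
  using assms by (auto simp: hom_def Sn_def)

lemma sigma_mult:
  assumes "\<sigma> \<in> hom G (Sn n)" "x \<in> carrier G" "y \<in> carrier G"
  shows "\<sigma> (x \<otimes>\<^bsub>G\<^esub> y) = \<sigma> y \<circ> \<sigma> x"
  using assms by (auto simp: hom_def Sn_def)

lemma sigma_one:
  assumes "group G" "\<sigma> \<in> hom G (Sn n)"
  shows "\<sigma> \<one>\<^bsub>G\<^esub> = id"
proof
  fix t
  have p: "\<sigma> \<one>\<^bsub>G\<^esub> permutes {1..n}" using sigma_perm[OF assms(2)] group.is_monoid[OF assms(1)] by (simp add: monoid.one_closed)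
  have "\<sigma> \<one>\<^bsub>G\<^esub> = \<sigma> \<one>\<^bsub>G\<^esub> \<circ> \<sigma> \<one>\<^bsub>G\<^esub>"
    using sigma_mult[OF assms(2), of "\<one>\<^bsub>G\<^esub>" "\<one>\<^bsub>G\<^esub>"] assms(1) by (simp add: group.is_monoid monoid.one_closed)
  hence "\<sigma> \<one>\<^bsub>G\<^esub> (\<sigma> \<one>\<^bsub>G\<^esub> t) = \<sigma> \<one>\<^bsub>G\<^esub> t" by (metis comp_apply)
  thus "\<sigma> \<one>\<^bsub>G\<^esub> t = id t" using permutes_inj[OF p] by (simp add: inj_eq)
qed

theorem theorem3p3:
  fixes G :: "('g, 'y) monoid_scheme" and H :: "('h, 'x) monoid_scheme"
    and \<sigma> :: "'g \<Rightarrow> nat \<Rightarrow> nat" and n :: nat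
  assumes "n \<ge> 2"
    and "group G" and "group H"
    and "carrier G \<noteq> {\<one>\<^bsub>G\<^esub>}" and "carrier H \<noteq> {\<one>\<^bsub>H\<^esub>}"
    and "\<sigma> \<in> hom G (Sn n)" and "\<sigma> ` carrier G = carrier (Sn n)"
  shows "(group_center (wreath H G n \<sigma>)
           = (diag_emb H G n ` group_center H)
               <#>\<^bsub>wreath H G n \<sigma>\<^esub> (top_emb H n ` (group_center G \<inter> kernel G (Sn n) \<sigma>)))
         \<and> (group_center G \<subseteq> kernel G (Sn n) \<sigma> \<longrightarrow>
         group_center (wreath H G n \<sigma>)
           = (diag_emb H G n ` group_center H)
               <#>\<^bsub>wreath H G n \<sigma>\<^esub> (top_emb H n ` group_center G))"
proof -
  let ?W = "wreath H G n \<sigma>"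
  let ?I = "{1..n::nat}"
  interpret G: group G by fact
  interpret H: group H by fact
  have s1: "\<sigma> \<one>\<^bsub>G\<^esub> = id" by (rule sigma_one[OF assms(2,6)])
  have sp: "\<And>x. x \<in> carrier G \<Longrightarrow> \<sigma> x permutes ?I" by (rule sigma_perm[OF assms(6)])
  have spI: "\<sigma> x i \<in> ?I" if "x \<in> carrier G" "i \<in> ?I" for x i
    using permutes_in_image[OF sp[OF that(1)]] that(2) by simp
  have ker: "kernel G (Sn n) \<sigma> = {x \<in> carrier G. \<sigma> x = id}"
    by (simp add: kernel_def Sn_def)
  have prod: "diag_emb H G n a \<otimes>\<^bsub>?W\<^esub> top_emb H n g = ((\<lambda>i\<in>?I. a), g)"
    if "a \<in> carrier H" "g \<in> carrier G" for a g
    using that by (auto simp add: diag_emb_def top_emb_def wmult s1 intro!: restrict_ext)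
  have main: "group_center ?W = (diag_emb H G n ` group_center H)
               <#>\<^bsub>?W\<^esub> (top_emb H n ` (group_center G \<inter> kernel G (Sn n) \<sigma>))"
  proof
    show "group_center ?W \<subseteq> (diag_emb H G n ` group_center H)
               <#>\<^bsub>?W\<^esub> (top_emb H n ` (group_center G \<inter> kernel G (Sn n) \<sigma>))"
    proof
      fix z assume z: "z \<in> group_center ?W"
      obtain h g where zhg: "z = (h,g)" by fastforce
      have hc: "h \<in> ?I \<rightarrow>\<^sub>E carrier H" and gc: "g \<in> carrier G"
        using z zhg by (auto simp: group_center_def wcarrier)
      have hi: "h i \<in> carrier H" if "i \<in> ?I" for i using hc that by auto
      have comm: "(h,g) \<otimes>\<^bsub>?W\<^esub> w = w \<otimes>\<^bsub>?W\<^esub> (h,g)" if "w \<in> carrier ?W" for w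
        using z zhg that by (auto simp: group_center_def)
      have c1: "h i \<otimes>\<^bsub>H\<^esub> k (\<sigma> g i) = k i \<otimes>\<^bsub>H\<^esub> h i"
        if k: "k \<in> ?I \<rightarrow>\<^sub>E carrier H" and i: "i \<in> ?I" for k i
      proof -
        have "(h,g) \<otimes>\<^bsub>?W\<^esub> (k, \<one>\<^bsub>G\<^esub>) = (k, \<one>\<^bsub>G\<^esub>) \<otimes>\<^bsub>?W\<^esub> (h,g)"
          using comm k by (simp add: wcarrier)
        hence "(\<lambda>i\<in>?I. h i \<otimes>\<^bsub>H\<^esub> k (\<sigma> g i)) i = (\<lambda>i\<in>?I. k i \<otimes>\<^bsub>H\<^esub> h (\<sigma> \<one>\<^bsub>G\<^esub> i)) i"
          unfolding wmult by simp
        thus ?thesis using i s1 by simp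
      qed
      obtain a where a: "a \<in> carrier H" "a \<noteq> \<one>\<^bsub>H\<^esub>" using assms(5) H.one_closed by blast
      have sg: "\<sigma> g = id"
      proof
        fix i show "\<sigma> g i = id i"
        proof (cases "i \<in> ?I")
          case False thus ?thesis using sp[OF gc] unfolding permutes_def by simp
        next
          case True
          show ?thesis
          proof (rule ccontr)
            assume ne: "\<sigma> g i \<noteq> id i"
            define k where "k = (\<lambda>t\<in>?I. if t = \<sigma> g i then a else \<one>\<^bsub>H\<^esub>)"
            have kc: "k \<in> ?I \<rightarrow>\<^sub>E carrier H" using a by (auto simp: k_def)
            have "h i \<otimes>\<^bsub>H\<^esub> k (\<sigma> g i) = k i \<otimes>\<^bsub>H\<^esub> h i" using c1[OF kc True] .
            moreover have "k (\<sigma> g i) = a" using spI[OF gc True] by (simp add: k_def)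
            moreover have "k i = \<one>\<^bsub>H\<^esub>" using True ne by (auto simp: k_def)
            ultimately have "h i \<otimes>\<^bsub>H\<^esub> a = h i \<otimes>\<^bsub>H\<^esub> \<one>\<^bsub>H\<^esub>" using hi[OF True] by simp
            hence "a = \<one>\<^bsub>H\<^esub>" using H.l_cancel[OF _ a(1) H.one_closed hi[OF True]] by simp
            thus False using a by simp
          qed
        qed
      qed
      have hcent: "h i \<in> group_center H" if i: "i \<in> ?I" for i
      proof -
        have "h i \<otimes>\<^bsub>H\<^esub> b = b \<otimes>\<^bsub>H\<^esub> h i" if b: "b \<in> carrier H" for b
          using c1[of "\<lambda>t\<in>?I. b" i] b i sg hi[OF i] by auto
        thus ?thesis using hc i by (auto simp: group_center_def)
      qed
      have c2: "g \<otimes>\<^bsub>G\<^esub> x = x \<otimes>\<^bsub>G\<^esub> g \<and> (\<forall>i\<in>?I. h i = h (\<sigma> x i))" if x: "x \<in> carrier G" for x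
      proof -
        have "(h,g) \<otimes>\<^bsub>?W\<^esub> (\<lambda>i\<in>?I. \<one>\<^bsub>H\<^esub>, x) = (\<lambda>i\<in>?I. \<one>\<^bsub>H\<^esub>, x) \<otimes>\<^bsub>?W\<^esub> (h,g)"
          using comm x by (simp add: wcarrier)
        hence e: "(\<lambda>i\<in>?I. h i \<otimes>\<^bsub>H\<^esub> (\<lambda>i\<in>?I. \<one>\<^bsub>H\<^esub>) (\<sigma> g i)) = (\<lambda>i\<in>?I. (\<lambda>i\<in>?I. \<one>\<^bsub>H\<^esub>) i \<otimes>\<^bsub>H\<^esub> h (\<sigma> x i))"
          and "g \<otimes>\<^bsub>G\<^esub> x = x \<otimes>\<^bsub>G\<^esub> g"
          unfolding wmult by simp_all
        moreover have "h i = h (\<sigma> x i)" if i: "i \<in> ?I" for i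
        proof -
          have "(\<lambda>i\<in>?I. h i \<otimes>\<^bsub>H\<^esub> (\<lambda>i\<in>?I. \<one>\<^bsub>H\<^esub>) (\<sigma> g i)) i = (\<lambda>i\<in>?I. (\<lambda>i\<in>?I. \<one>\<^bsub>H\<^esub>) i \<otimes>\<^bsub>H\<^esub> h (\<sigma> x i)) i"
            using e by simp
          thus ?thesis using i sg hi[OF i] hi[OF spI[OF x i]] spI[OF x i] by simp
        qed
        ultimately show ?thesis by blast
      qed
      have gcent: "g \<in> group_center G \<inter> kernel G (Sn n) \<sigma>"
      proof -
        have "g \<in> group_center G" unfolding group_center_def using c2 gc by blast
        moreover have "g \<in> kernel G (Sn n) \<sigma>" using ker sg gc by simp
        ultimately show ?thesis by blast
      qed
      have const: "h i = h 1" if i: "i \<in> ?I" for i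
      proof -
        have one: "1 \<in> ?I" using assms(1) by simp
        have "transpose 1 i \<in> carrier (Sn n)"
          using permutes_swap_id[OF one i] by (simp add: Sn_def)
        hence "transpose 1 i \<in> \<sigma> ` carrier G" using assms(7) by simp
        then obtain x where x: "x \<in> carrier G" "\<sigma> x = transpose 1 i" by (metis imageE)
        have "h 1 = h (\<sigma> x 1)" using c2[OF x(1)] one by blast
        thus ?thesis using x by simp
      qed
      have hdiag: "h = (\<lambda>i\<in>?I. h 1)"
      proof
        fix i show "h i = (\<lambda>i\<in>?I. h 1) i"
        proof (cases "i \<in> ?I")
          case True thus ?thesis using const[OF True] by simp
        next
          case False thus ?thesis using hc by (auto simp add: PiE_def extensional_def)
        qed
      qed
      have h1: "h 1 \<in> group_center H" using hcent assms(1) by simp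
      have "z = diag_emb H G n (h 1) \<otimes>\<^bsub>?W\<^esub> top_emb H n g"
      proof -
        have "z = ((\<lambda>i\<in>?I. h 1), g)" using zhg hdiag by metis
        thus ?thesis using prod[of "h 1" g] hi[of 1] assms(1) gc by simp
      qed
      thus "z \<in> (diag_emb H G n ` group_center H)
               <#>\<^bsub>?W\<^esub> (top_emb H n ` (group_center G \<inter> kernel G (Sn n) \<sigma>))"
        using h1 gcent by (auto simp: set_mult_def)
    qed
  next
    show "(diag_emb H G n ` group_center H)
               <#>\<^bsub>?W\<^esub> (top_emb H n ` (group_center G \<inter> kernel G (Sn n) \<sigma>)) \<subseteq> group_center ?W"
    proof
      fix z assume "z \<in> (diag_emb H G n ` group_center H)
               <#>\<^bsub>?W\<^esub> (top_emb H n ` (group_center G \<inter> kernel G (Sn n) \<sigma>))"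
      then obtain a g where a: "a \<in> group_center H" and g: "g \<in> group_center G" "g \<in> kernel G (Sn n) \<sigma>"
        and zz: "z = diag_emb H G n a \<otimes>\<^bsub>?W\<^esub> top_emb H n g"
        by (auto simp: set_mult_def)
      have ac: "a \<in> carrier H" and gc: "g \<in> carrier G" and sg: "\<sigma> g = id"
        using a g ker by (auto simp: group_center_def)
      have z: "z = ((\<lambda>i\<in>?I. a), g)" using zz prod ac gc by simp
      have "z \<otimes>\<^bsub>?W\<^esub> w = w \<otimes>\<^bsub>?W\<^esub> z" if w: "w \<in> carrier ?W" for w
      proof -
        obtain k x where wkx: "w = (k,x)" by fastforce
        have kc: "k \<in> ?I \<rightarrow>\<^sub>E carrier H" and xc: "x \<in> carrier G"
          using w wkx by (auto simp: wcarrier)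
        have "(\<lambda>i\<in>?I. (\<lambda>i\<in>?I. a) i \<otimes>\<^bsub>H\<^esub> k (\<sigma> g i)) = (\<lambda>i\<in>?I. k i \<otimes>\<^bsub>H\<^esub> (\<lambda>i\<in>?I. a) (\<sigma> x i))"
        proof (rule restrict_ext)
          fix i assume i: "i \<in> ?I"
          show "(\<lambda>i\<in>?I. a) i \<otimes>\<^bsub>H\<^esub> k (\<sigma> g i) = k i \<otimes>\<^bsub>H\<^esub> (\<lambda>i\<in>?I. a) (\<sigma> x i)"
            using i spI[OF xc i] sg a kc by (auto simp: group_center_def)
        qed
        moreover have "g \<otimes>\<^bsub>G\<^esub> x = x \<otimes>\<^bsub>G\<^esub> g" using g xc by (auto simp: group_center_def)
        ultimately show ?thesis using z wkx by (simp add: wmult)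
      qed
      moreover have "z \<in> carrier ?W" using z ac gc by (auto simp: wcarrier)
      ultimately show "z \<in> group_center ?W" by (auto simp: group_center_def)
    qed
  qed
  show ?thesis
  proof
    show "group_center ?W = (diag_emb H G n ` group_center H)
               <#>\<^bsub>?W\<^esub> (top_emb H n ` (group_center G \<inter> kernel G (Sn n) \<sigma>))" by (rule main)
    show "group_center G \<subseteq> kernel G (Sn n) \<sigma> \<longrightarrow> group_center ?W
           = (diag_emb H G n ` group_center H) <#>\<^bsub>?W\<^esub> (top_emb H n ` group_center G)"
      using main by (simp add: Int_absorb2)
  qed
qed

end
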